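(* Let $d\ge 1$ and $k\ge d-1$ be integers. Then every injective function $f\colon S^k\to\mathbb{R}^d$ (not assumed continuous) satisfies $\alpha(f)\ge c_{d-1,k}$.
   Context: For a topological space $X$ and a metric space $Y$, the modulus of discontinuity of a function $g\colon X\to Y$ is $\delta(g)=\inf\{\delta\ge 0 : \text{for every } x\in X \text{ there is an open neighborhood } U_x \text{ of } x \text{ with } \operatorname{diam}(g(U_x))\le\delta\}$. The unit sphere $S^{m}$ carries the geodesic (angle) metric $d(u,v)=\arccos\langle u,v\rangle$. For a topological space $X$, $\mathrm{Conf}_2(X)=\{(x,y)\in X\times X: x\neq y\}$ with the subspace topology. For an injective function $f\colon X\to\mathbb{R}^d$, define $\Phi_f\colon \mathrm{Conf}_2(X)\to S^{d-1}$ by $\Phi_f(x,y)=\frac{f(x)-f(y)}{\|f(x)-f(y)\|}$ and $\alpha(f)=\delta(\Phi_f)$. For a metric space $Y$ and $r\ge 0$, the Vietoris–Rips complex $\mathrm{VR}(Y;r)$ is the simplicial complex with vertex set $Y$ whose simplices are the finite subsets of $Y$ of diameter $\le r$ (considered via its geometric realization). For integers $k\ge n\ge 0$, $c_{n,k}=\inf\{r\ge 0: \text{there exists a continuous map } S^k\to\mathrm{VR}(S^n;r) \text{ commuting with the } \mathbb{Z}/2\text{-actions}\}$, where $\mathbb{Z}/2$ acts antipodally on $S^k$ and on $\mathrm{VR}(S^n;r)$ via the simplicial map induced by the antipodal map of $S^n$. *)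

theory Defs
  imports "HOL-Analysis.Analysis"
begin

definition geod :: "'a::real_inner \<Rightarrow> 'a \<Rightarrow> real" where
  "geod u v = arccos (inner u v)"

definition mdiam :: "('b \<Rightarrow> 'b \<Rightarrow> real) \<Rightarrow> 'b set \<Rightarrow> real" where
  "mdiam dist' A = Sup {dist' a b | a b. a \<in> A \<and> b \<in> A}"

definition mod_disc :: "'a topology \<Rightarrow> ('b \<Rightarrow> 'b \<Rightarrow> real) \<Rightarrow> ('a \<Rightarrow> 'b) \<Rightarrow> real" where
  "mod_disc X dist' g = Inf {\<delta>. \<delta> \<ge> 0 \<and>
     (\<forall>x\<in>topspace X. \<exists>U. openin X U \<and> x \<in> U \<and> mdiam dist' (g ` U) \<le> \<delta>)}"

definition Conf2 :: "'a topology \<Rightarrow> ('a \<times> 'a) topology" where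
  "Conf2 X = subtopology (prod_topology X X) {(x, y). x \<noteq> y}"

definition Phi :: "('a \<Rightarrow> 'd::real_normed_vector) \<Rightarrow> 'a \<times> 'a \<Rightarrow> 'd" where
  "Phi f p = (case p of (x, y) \<Rightarrow> (1 / norm (f x - f y)) *\<^sub>R (f x - f y))"

text \<open>alpha(f) for f defined on the unit sphere S^k of 'k (so k = DIM('k) - 1).\<close>
definition alpha :: "('k::euclidean_space \<Rightarrow> 'd::euclidean_space) \<Rightarrow> real" where
  "alpha f = mod_disc (Conf2 (subtopology euclidean (sphere (0::'k) 1))) geod (Phi f)"

text \<open>Vietoris--Rips complex VR(Y;r) (metric dist'), geometric realization with the
  weak (coherent) topology.  Points are finitely supported weight functions.\<close>
definition VR_simplex :: "('b \<Rightarrow> 'b \<Rightarrow> real) \<Rightarrow> 'b set \<Rightarrow> real \<Rightarrow> 'b set \<Rightarrow> bool" where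
  "VR_simplex dist' Y r \<sigma> \<longleftrightarrow> finite \<sigma> \<and> \<sigma> \<noteq> {} \<and> \<sigma> \<subseteq> Y \<and>
      (\<forall>a\<in>\<sigma>. \<forall>b\<in>\<sigma>. dist' a b \<le> r)"

definition closed_simplex :: "'b set \<Rightarrow> ('b \<Rightarrow> real) set" where
  "closed_simplex \<sigma> = {w. (\<forall>y. 0 \<le> w y) \<and> (\<forall>y. y \<notin> \<sigma> \<longrightarrow> w y = 0) \<and> sum w \<sigma> = 1}"

definition VR_carrier :: "('b \<Rightarrow> 'b \<Rightarrow> real) \<Rightarrow> 'b set \<Rightarrow> real \<Rightarrow> ('b \<Rightarrow> real) set" where
  "VR_carrier dist' Y r = \<Union>{closed_simplex \<sigma> | \<sigma>. VR_simplex dist' Y r \<sigma>}"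

definition VR_top :: "('b \<Rightarrow> 'b \<Rightarrow> real) \<Rightarrow> 'b set \<Rightarrow> real \<Rightarrow> ('b \<Rightarrow> real) topology" where
  "VR_top dist' Y r = topology (\<lambda>U. U \<subseteq> VR_carrier dist' Y r \<and>
     (\<forall>\<sigma>. VR_simplex dist' Y r \<sigma> \<longrightarrow>
        openin (subtopology euclidean (closed_simplex \<sigma>)) (U \<inter> closed_simplex \<sigma>)))"

definition c_const :: "'k::euclidean_space itself \<Rightarrow> 'n::euclidean_space itself \<Rightarrow> real" where
  "c_const _ _ = Inf {r. r \<ge> 0 \<and> (\<exists>F. continuous_map (subtopology euclidean (sphere (0::'k) 1))
        (VR_top geod (sphere (0::'n) 1) r) F \<and>
      (\<forall>x\<in>sphere (0::'k) 1. F (- x) = (\<lambda>y. F x (- y))))}"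

end

theory Submission imports Defs begin

lemma VR_istop: "istopology (\<lambda>U. U \<subseteq> VR_carrier dist' Y r \<and>
     (\<forall>\<sigma>. VR_simplex dist' Y r \<sigma> \<longrightarrow>
        openin (subtopology euclidean (closed_simplex \<sigma>)) (U \<inter> closed_simplex \<sigma>)))"
  unfolding istopology_def
proof safe
  fix S T \<sigma> assume "S \<subseteq> VR_carrier dist' Y r" "T \<subseteq> VR_carrier dist' Y r"
   "\<forall>\<sigma>. VR_simplex dist' Y r \<sigma> \<longrightarrow> openin (top_of_set (closed_simplex \<sigma>)) (S \<inter> closed_simplex \<sigma>)"
   "\<forall>\<sigma>. VR_simplex dist' Y r \<sigma> \<longrightarrow> openin (top_of_set (closed_simplex \<sigma>)) (T \<inter> closed_simplex \<sigma>)"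
   "VR_simplex dist' Y r \<sigma>"
  then have "openin (top_of_set (closed_simplex \<sigma>)) ((S \<inter> closed_simplex \<sigma>) \<inter> (T \<inter> closed_simplex \<sigma>))"
    by (simp add: openin_Int)
  then show "openin (top_of_set (closed_simplex \<sigma>)) (S \<inter> T \<inter> closed_simplex \<sigma>)"
    by (simp add: Int_ac)
next
  fix K \<sigma> assume K: "\<forall>S\<in>K. S \<subseteq> VR_carrier dist' Y r \<and>
       (\<forall>\<sigma>. VR_simplex dist' Y r \<sigma> \<longrightarrow> openin (top_of_set (closed_simplex \<sigma>)) (S \<inter> closed_simplex \<sigma>))"
    "VR_simplex dist' Y r \<sigma>"
  then have "openin (top_of_set (closed_simplex \<sigma>)) (\<Union>((\<lambda>S. S \<inter> closed_simplex \<sigma>) ` K))"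
    by (intro openin_Union) auto
  moreover have "\<Union>((\<lambda>S. S \<inter> closed_simplex \<sigma>) ` K) = \<Union>K \<inter> closed_simplex \<sigma>" by auto
  ultimately show "openin (top_of_set (closed_simplex \<sigma>)) (\<Union>K \<inter> closed_simplex \<sigma>)" by simp
qed auto

lemma VR_open_iff: "openin (VR_top dist' Y r) U \<longleftrightarrow> U \<subseteq> VR_carrier dist' Y r \<and>
     (\<forall>\<sigma>. VR_simplex dist' Y r \<sigma> \<longrightarrow>
        openin (subtopology euclidean (closed_simplex \<sigma>)) (U \<inter> closed_simplex \<sigma>))"
proof -
  have "openin (VR_top dist' Y r) = (\<lambda>U. U \<subseteq> VR_carrier dist' Y r \<and>
     (\<forall>\<sigma>. VR_simplex dist' Y r \<sigma> \<longrightarrow>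
        openin (subtopology euclidean (closed_simplex \<sigma>)) (U \<inter> closed_simplex \<sigma>)))"
    unfolding VR_top_def by (rule topology_inverse'[OF VR_istop])
  then show ?thesis by simp
qed

lemma VR_topspace: "topspace (VR_top dist' Y r) = VR_carrier dist' Y r"
proof
  show "topspace (VR_top dist' Y r) \<subseteq> VR_carrier dist' Y r"
    using VR_open_iff openin_topspace by blast
  have "closed_simplex \<sigma> \<subseteq> VR_carrier dist' Y r" if "VR_simplex dist' Y r \<sigma>" for \<sigma>
    using that unfolding VR_carrier_def by blast
  then have "openin (VR_top dist' Y r) (VR_carrier dist' Y r)"
    unfolding VR_open_iff by (auto simp: Int_absorb1)
  then show "VR_carrier dist' Y r \<subseteq> topspace (VR_top dist' Y r)" by (rule openin_subset)
qed

lemma closed_cs: "closed (closed_simplex \<sigma>)"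
proof -
  have "closed_simplex \<sigma> = (\<Inter>y. {w. 0 \<le> w y}) \<inter> (\<Inter>y\<in>-\<sigma>. {w. w y = 0}) \<inter> {w. sum w \<sigma> = 1}"
    unfolding closed_simplex_def by auto
  moreover have "closed {w::'a\<Rightarrow>real. 0 \<le> w y}" for y
    by (intro closed_Collect_le continuous_intros continuous_on_product_coordinates)
  moreover have "closed {w::'a\<Rightarrow>real. w y = 0}" for y
    by (intro closed_Collect_eq continuous_intros continuous_on_product_coordinates)
  moreover have "closed {w::'a\<Rightarrow>real. sum w \<sigma> = 1}"
  proof (cases "finite \<sigma>")
    case True
    have "continuous_on UNIV (\<lambda>w::'a\<Rightarrow>real. sum w \<sigma>)"
      by (rule continuous_on_sum) simp
    from closed_Collect_eq[OF this continuous_on_const] show ?thesis by simp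
  next
    case False then show ?thesis by simp
  qed
  ultimately show ?thesis by (auto intro!: closed_Int closed_INT)
qed

lemma VR_cont:
  fixes F :: "'a::topological_space \<Rightarrow> ('b \<Rightarrow> real)"
  assumes cont: "continuous_on S F" and fin: "finite Y0"
   and sim: "\<And>z. z \<in> S \<Longrightarrow> \<exists>\<sigma>. \<sigma> \<subseteq> Y0 \<and> VR_simplex dist' Y r \<sigma> \<and> F z \<in> closed_simplex \<sigma>"
  shows "continuous_map (top_of_set S) (VR_top dist' Y r) F"
  unfolding continuous_map_closedin
proof (intro conjI allI impI Pi_I)
  fix z assume "z \<in> topspace (top_of_set S)"
  then obtain \<sigma> where "VR_simplex dist' Y r \<sigma>" "F z \<in> closed_simplex \<sigma>" using sim by auto
  then show "F z \<in> topspace (VR_top dist' Y r)" unfolding VR_topspace VR_carrier_def by auto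
next
  fix C assume C: "closedin (VR_top dist' Y r) C"
  let ?S = "{\<sigma>. \<sigma> \<subseteq> Y0 \<and> VR_simplex dist' Y r \<sigma>}"
  have finS: "finite ?S" using fin by (auto intro: finite_subset[of _ "Pow Y0"])
  have cl: "closed (C \<inter> closed_simplex \<sigma>)" if "VR_simplex dist' Y r \<sigma>" for \<sigma>
  proof -
    from C have op: "openin (VR_top dist' Y r) (VR_carrier dist' Y r - C)"
      unfolding closedin_def VR_topspace by auto
    then have "openin (top_of_set (closed_simplex \<sigma>)) ((VR_carrier dist' Y r - C) \<inter> closed_simplex \<sigma>)"
      using that unfolding VR_open_iff by blast
    moreover have "(VR_carrier dist' Y r - C) \<inter> closed_simplex \<sigma> = closed_simplex \<sigma> - (C \<inter> closed_simplex \<sigma>)"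
      using that unfolding VR_carrier_def by blast
    ultimately have "closedin (top_of_set (closed_simplex \<sigma>)) (C \<inter> closed_simplex \<sigma>)"
      by (simp add: closedin_def)
    then show ?thesis using closed_cs closedin_closed_trans by blast
  qed
  have eq: "{x \<in> topspace (top_of_set S). F x \<in> C} = \<Union>((\<lambda>\<sigma>. S \<inter> F -` (C \<inter> closed_simplex \<sigma>)) ` ?S)"
    using sim by fastforce
  show "closedin (top_of_set S) {x \<in> topspace (top_of_set S). F x \<in> C}"
    unfolding eq using finS cl by (intro closedin_Union) (auto simp del: vimage_Int intro!: continuous_closedin_preimage[OF cont])
qed

lemma main_construct:
  fixes g :: "'k::euclidean_space \<Rightarrow> 'd::euclidean_space" and \<delta> :: real
  assumes odd: "\<And>z. g (-z) = - g z"
  and gs: "\<And>z. z \<in> sphere 0 1 \<Longrightarrow> g z \<in> sphere 0 1"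
  and loc: "\<And>x. x \<in> sphere 0 1 \<Longrightarrow> \<exists>T. open T \<and> x \<in> T \<and> (\<forall>a\<in>T \<inter> sphere 0 1. \<forall>b\<in>T \<inter> sphere 0 1. geod (g a) (g b) \<le> \<delta>)"
  shows "\<exists>F. continuous_map (top_of_set (sphere (0::'k) 1)) (VR_top geod (sphere (0::'d) 1) \<delta>) F \<and> (\<forall>x\<in>sphere 0 1. F (-x) = (\<lambda>y. F x (-y)))"
proof -
  let ?S = "sphere (0::'k) 1"
  obtain T where T: "\<And>x. x \<in> ?S \<Longrightarrow> open (T x) \<and> x \<in> T x \<and> (\<forall>a\<in>T x \<inter> ?S. \<forall>b\<in>T x \<inter> ?S. geod (g a) (g b) \<le> \<delta>)"
  proof -
    have "\<forall>x\<in>?S. \<exists>T. open T \<and> x \<in> T \<and> (\<forall>a\<in>T \<inter> ?S. \<forall>b\<in>T \<inter> ?S. geod (g a) (g b) \<le> \<delta>)"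
      using loc by blast
    from bchoice[OF this] show ?thesis using that by blast
  qed
  have "?S \<subseteq> \<Union>(T ` ?S)" using T by blast
  then obtain e where e: "0 < e" "\<And>x. x \<in> ?S \<Longrightarrow> \<exists>G \<in> T ` ?S. ball x e \<subseteq> G"
    by (rule Heine_Borel_lemma[OF compact_sphere]) (use T in auto)
  have "?S \<subseteq> (\<Union>c\<in>?S. ball c e)" using e(1) by force
  then obtain C0 where C0: "C0 \<subseteq> ?S" "finite C0" "?S \<subseteq> (\<Union>c\<in>C0. ball c e)"
    using compactE_image[OF compact_sphere, of ?S "\<lambda>c. ball c e"] by blast
  define C where "C = C0 \<union> uminus ` C0"
  have Cfin: "finite C" using C0 unfolding C_def by simp
  have CS: "C \<subseteq> ?S" using C0 unfolding C_def by auto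
  have Csym: "uminus ` C = C" unfolding C_def by (auto simp: image_Un image_image)
  have reidx: "(\<Sum>c\<in>C. h c) = (\<Sum>c\<in>C. h (-c))" for h :: "'k \<Rightarrow> real"
  proof -
    have "(\<Sum>c\<in>C. h (-c)) = sum h (uminus ` C)"
      by (subst sum.reindex) (auto simp: inj_on_def)
    then show ?thesis using Csym by simp
  qed
  define \<psi> where "\<psi> c z = max 0 (e - dist z c)" for c z :: 'k
  define s where "s z = (\<Sum>c\<in>C. \<psi> c z)" for z
  define F where "F z = (\<lambda>y. (\<Sum>c\<in>C. if g c = y then \<psi> c z else 0) / s z)" for z
  have \<psi>_nonneg: "0 \<le> \<psi> c z" for c z unfolding \<psi>_def by simp
  have \<psi>_pos: "\<psi> c z \<noteq> 0 \<longleftrightarrow> dist z c < e" for c z unfolding \<psi>_def by auto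
  have \<psi>_neg: "\<psi> (-c) (-z) = \<psi> c z" for c z unfolding \<psi>_def by (simp add: dist_minus)
  have s_pos: "0 < s z" if zS': "z \<in> ?S" for z
  proof -
    obtain c where c: "c \<in> C0" "z \<in> ball c e" using C0(3) zS' by blast
    then have "c \<in> C" unfolding C_def by simp
    have "0 < \<psi> c z" using c \<psi>_pos[of c z] \<psi>_nonneg[of c z] by (simp add: dist_commute)
    also have "\<psi> c z \<le> s z" unfolding s_def
      by (rule member_le_sum) (use \<open>c \<in> C\<close> Cfin \<psi>_nonneg in auto)
    finally show ?thesis .
  qed
  have s_neg: "s (-z) = s z" for z
    unfolding s_def by (subst reidx) (simp add: \<psi>_neg)
  have equiv: "F (-x) = (\<lambda>y. F x (-y))" for x
  proof
    fix y
    have "(\<Sum>c\<in>C. if g c = y then \<psi> c (-x) else 0) = (\<Sum>c\<in>C. if g (-c) = y then \<psi> (-c) (-x) else 0)"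
      by (rule reidx)
    also have "\<dots> = (\<Sum>c\<in>C. if g c = -y then \<psi> c x else 0)"
      by (intro sum.cong refl) (auto simp: odd \<psi>_neg)
    finally show "F (-x) y = F x (-y)" unfolding F_def s_neg by simp
  qed
  have cont: "continuous_on ?S F"
    unfolding F_def
  proof (rule continuous_on_coordinatewise_then_product)
    fix y
    have A: "continuous_on ?S (\<lambda>z. \<Sum>c\<in>C. if g c = y then \<psi> c z else 0)"
    proof (intro continuous_on_sum)
      fix c
      show "continuous_on ?S (\<lambda>z. if g c = y then \<psi> c z else 0)"
        by (cases "g c = y") (auto simp: \<psi>_def intro!: continuous_intros)
    qed
    have B: "continuous_on ?S s" unfolding s_def \<psi>_def by (intro continuous_intros)
    have Cc: "\<forall>z\<in>?S. s z \<noteq> 0" using s_pos by force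
    show "continuous_on ?S (\<lambda>z. (\<lambda>y. (\<Sum>c\<in>C. if g c = y then \<psi> c z else 0) / s z) y)"
      using continuous_on_divide[OF A B Cc] by simp
  qed
  have sim: "\<exists>\<sigma>. \<sigma> \<subseteq> g ` C \<and> VR_simplex geod (sphere 0 1) \<delta> \<sigma> \<and> F z \<in> closed_simplex \<sigma>"
    if zS: "z \<in> ?S" for z
  proof (intro exI conjI)
    define \<sigma> where "\<sigma> = g ` {c\<in>C. dist z c < e}"
    show "\<sigma> \<subseteq> g ` C" unfolding \<sigma>_def by auto
    have fs: "finite \<sigma>" unfolding \<sigma>_def using Cfin by simp
    show "VR_simplex geod (sphere 0 1) \<delta> \<sigma>"
      unfolding VR_simplex_def
    proof (intro conjI ballI)
      show "finite \<sigma>" by (rule fs)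
      obtain c where c: "c \<in> C0" "z \<in> ball c e" using C0(3) zS by blast
      then have "g c \<in> \<sigma>" unfolding \<sigma>_def C_def by (auto simp: dist_commute)
      then show "\<sigma> \<noteq> {}" by blast
      show "\<sigma> \<subseteq> sphere 0 1" unfolding \<sigma>_def using CS gs by blast
      obtain x' where x': "x' \<in> ?S" "ball z e \<subseteq> T x'" using e(2)[OF zS] by blast
      fix a b assume "a \<in> \<sigma>" "b \<in> \<sigma>"
      then obtain ca cb where "ca \<in> C" "dist z ca < e" "a = g ca" "cb \<in> C" "dist z cb < e" "b = g cb"
        unfolding \<sigma>_def by blast
      then have "ca \<in> T x' \<inter> ?S" "cb \<in> T x' \<inter> ?S" using x'(2) CS by auto
      then show "geod a b \<le> \<delta>" using T[OF x'(1)] \<open>a = g ca\<close> \<open>b = g cb\<close> by simp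
    qed
    have zero: "(if g c = y then \<psi> c z else 0) = 0" if "y \<notin> \<sigma>" "c \<in> C" for y c
      using that \<psi>_pos[of c z] unfolding \<sigma>_def by auto
    show "F z \<in> closed_simplex \<sigma>"
      unfolding closed_simplex_def
    proof (intro CollectI conjI allI impI)
      fix y
      show "0 \<le> F z y" unfolding F_def using s_pos[OF zS] \<psi>_nonneg
        by (auto intro!: divide_nonneg_pos sum_nonneg)
      assume "y \<notin> \<sigma>"
      then show "F z y = 0" unfolding F_def using zero by simp
    next
      have "sum (F z) \<sigma> = (\<Sum>y\<in>\<sigma>. \<Sum>c\<in>C. if g c = y then \<psi> c z else 0) / s z"
        unfolding F_def by (simp add: sum_divide_distrib)
      also have "\<dots> = (\<Sum>c\<in>C. \<Sum>y\<in>\<sigma>. if g c = y then \<psi> c z else 0) / s z"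
        by (subst sum.swap) simp
      also have "\<dots> = (\<Sum>c\<in>C. if g c \<in> \<sigma> then \<psi> c z else 0) / s z"
        using fs by simp
      also have "\<dots> = s z / s z"
        unfolding s_def
      proof (intro arg_cong2[where f="(/)"] sum.cong refl)
        fix c assume "c \<in> C"
        then show "(if g c \<in> \<sigma> then \<psi> c z else 0) = \<psi> c z"
          using \<psi>_pos[of c z] unfolding \<sigma>_def by auto
      qed
      also have "\<dots> = 1" using s_pos[OF zS] by simp
      finally show "sum (F z) \<sigma> = 1" .
    qed
  qed
  show ?thesis
  proof (intro exI conjI ballI)
    show "continuous_map (top_of_set ?S) (VR_top geod (sphere (0::'d) 1) \<delta>) F"
      by (rule VR_cont[OF cont _ sim]) (use Cfin in auto)
    show "\<And>x. F (- x) = (\<lambda>y. F x (- y))" by (rule equiv)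
  qed
qed

lemma geod_bounds:
  fixes a b :: "'a::real_inner"
  assumes "norm a = 1" "norm b = 1"
  shows "0 \<le> geod a b" "geod a b \<le> pi"
proof -
  have "\<bar>inner a b\<bar> \<le> 1" using Cauchy_Schwarz_ineq2[of a b] assms by simp
  then have "-1 \<le> inner a b" "inner a b \<le> 1" by auto
  then show "0 \<le> geod a b" "geod a b \<le> pi" unfolding geod_def
    using arccos_lbound arccos_ubound by auto
qed

theorem theorem1p2:
  fixes f :: "'k::euclidean_space \<Rightarrow> 'd::euclidean_space"
  assumes "DIM('d) \<le> DIM('k)"
    and "inj_on f (sphere 0 1)"
  shows "alpha f \<ge> c_const TYPE('k) TYPE('d)"
proof -
  let ?S = "sphere (0::'k) 1"
  let ?X = "Conf2 (top_of_set ?S)"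
  define D where "D = {\<delta>. \<delta> \<ge> 0 \<and> (\<forall>x\<in>topspace ?X. \<exists>U. openin ?X U \<and> x \<in> U \<and> mdiam geod (Phi f ` U) \<le> \<delta>)}"
  define R where "R = {r. r \<ge> 0 \<and> (\<exists>F. continuous_map (top_of_set ?S)
        (VR_top geod (sphere (0::'d) 1) r) F \<and> (\<forall>x\<in>?S. F (- x) = (\<lambda>y. F x (- y))))}"
  have alpha: "alpha f = Inf D" unfolding alpha_def mod_disc_def D_def by simp
  have cc: "c_const TYPE('k) TYPE('d) = Inf R" unfolding c_const_def R_def by simp
  have top: "topspace ?X = {(x,y). x \<in> ?S \<and> y \<in> ?S \<and> x \<noteq> y}"
    unfolding Conf2_def by auto
  have unit: "norm (Phi f p) = 1" if pX: "p \<in> topspace ?X" for p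
  proof -
    obtain x y where p: "p = (x,y)" "x \<in> ?S" "y \<in> ?S" "x \<noteq> y" using pX top by auto
    then have "f x \<noteq> f y" using assms(2) by (meson inj_onD)
    then show ?thesis unfolding p Phi_def by simp
  qed
  have diam_bound: "geod (Phi f p) (Phi f q) \<le> mdiam geod (Phi f ` U)"
    if "U \<subseteq> topspace ?X" "p \<in> U" "q \<in> U" for U p q
    unfolding mdiam_def
  proof (rule cSup_upper)
    show "geod (Phi f p) (Phi f q) \<in> {geod a b |a b. a \<in> Phi f ` U \<and> b \<in> Phi f ` U}"
      using that by blast
    show "bdd_above {geod a b |a b. a \<in> Phi f ` U \<and> b \<in> Phi f ` U}"
      by (rule bdd_aboveI[where M=pi]) (use that unit geod_bounds in blast)
  qed
  have diam_pi: "mdiam geod (Phi f ` U) \<le> pi" if "U \<subseteq> topspace ?X" "U \<noteq> {}" for U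
    unfolding mdiam_def
    by (rule cSup_least) (use that unit geod_bounds in blast)+
  have piD: "pi \<in> D" unfolding D_def
    using diam_pi by (auto intro!: exI[where x="topspace ?X"])
  have main: "Inf R \<le> \<delta>" if "\<delta> \<in> D" for \<delta>
  proof -
    have d0: "\<delta> \<ge> 0" and dU: "\<And>x. x \<in> topspace ?X \<Longrightarrow> \<exists>U. openin ?X U \<and> x \<in> U \<and> mdiam geod (Phi f ` U) \<le> \<delta>"
      using that unfolding D_def by auto
    define g where "g z = Phi f (z, -z)" for z
    have odd: "g (-z) = - g z" for z
      unfolding g_def Phi_def by (simp add: norm_minus_commute flip: scaleR_minus_right)
    have inX: "(z, -z) \<in> topspace ?X" if "z \<in> ?S" for z
    proof -
      have "z \<noteq> 0" using that by auto
      have "z \<noteq> -z"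
      proof
        assume e: "z = -z"
        have "(2::real) *\<^sub>R z = z + z" by (rule scaleR_2)
        also have "\<dots> = z + - z" using arg_cong[OF e, of "\<lambda>w. z + w"] .
        also have "\<dots> = 0" by simp
        finally show False using \<open>z \<noteq> 0\<close> by simp
      qed
      then show ?thesis using that top by auto
    qed
    have gs: "g z \<in> sphere 0 1" if "z \<in> ?S" for z
      using unit[OF inX[OF that]] unfolding g_def by simp
    have hc: "continuous_map (top_of_set ?S) ?X (\<lambda>z. (z, -z))"
      unfolding Conf2_def continuous_map_in_subtopology
    proof
      show "continuous_map (top_of_set ?S) (prod_topology (top_of_set ?S) (top_of_set ?S)) (\<lambda>z. (z, - z))"
        unfolding continuous_map_paired by (auto intro!: continuous_intros)
      show "(\<lambda>z. (z, - z)) \<in> topspace (top_of_set ?S) \<rightarrow> {(x, y). x \<noteq> y}"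
        using inX top by auto
    qed
    have loc: "\<exists>T. open T \<and> x \<in> T \<and> (\<forall>a\<in>T \<inter> ?S. \<forall>b\<in>T \<inter> ?S. geod (g a) (g b) \<le> \<delta>)"
      if xS: "x \<in> ?S" for x
    proof -
      obtain U where U: "openin ?X U" "(x, -x) \<in> U" "mdiam geod (Phi f ` U) \<le> \<delta>"
        using dU[OF inX[OF xS]] by blast
      have "openin (top_of_set ?S) {z \<in> topspace (top_of_set ?S). (z, -z) \<in> U}"
        by (rule openin_continuous_map_preimage[OF hc U(1)])
      then obtain T where T: "open T" "{z \<in> ?S. (z, -z) \<in> U} = ?S \<inter> T"
        unfolding openin_open by auto
      have Usub: "U \<subseteq> topspace ?X" using U(1) by (rule openin_subset)
      show ?thesis
      proof (intro exI conjI ballI)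
        show "open T" by fact
        show "x \<in> T" using T(2) xS U(2) by blast
        fix a b assume "a \<in> T \<inter> ?S" "b \<in> T \<inter> ?S"
        then have "(a, -a) \<in> U" "(b, -b) \<in> U" using T(2) by blast+
        then show "geod (g a) (g b) \<le> \<delta>" unfolding g_def
          using diam_bound[OF Usub] U(3) by (meson order_trans)
      qed
    qed
    have "\<delta> \<in> R" unfolding R_def
      using main_construct[of g \<delta>] odd gs loc d0 by blast
    then show ?thesis
      by (rule cInf_lower) (auto simp: R_def intro!: bdd_belowI[where m=0])
  qed
  have "Inf R \<le> Inf D"
    by (rule cInf_greatest) (use piD main in auto)
  then show ?thesis using alpha cc by simp
qed

end
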